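(* Let $X$ be a Banach lattice with order continuous norm, let $(S_\lambda)_{\lambda\in\Lambda}$ be a family of convex monotone semigroups on $X$, and suppose $S$ is the semigroup envelope of $(S_\lambda)_{\lambda\in\Lambda}$. Then $S(t)x=\sup_{\pi\in P_t}J_\pi x$ for all $t\ge0$ and $x\in X$.
   Context: A Banach lattice $X$ has order continuous norm if $\|x_\alpha\|\to 0$ for every net $x_\alpha\downarrow 0$ (then every nonempty subset bounded above has a supremum). An operator $T\colon X\to X$ is convex if $T(\lambda x+(1-\lambda)y)\le\lambda Tx+(1-\lambda)Ty$, monotone if $x\le y\Rightarrow Tx\le Ty$, bounded if $\sup_{\|x\|\le r}\|Tx\|<\infty$ for all $r>0$. A semigroup on $X$ is a family $(S(t))_{t\ge0}$ of bounded operators $X\to X$ with $S(0)=\mathrm{id}$ and $S(t+s)=S(t)S(s)$; convex/monotone if every $S(t)$ is. For semigroups $S,T$ write $S\le T$ if $S(t)x\le T(t)x$ for all $t,x$. A semigroup is an upper bound of $(S_\lambda)$ if it dominates every $S_\lambda$; the (upper) semigroup envelope is the smallest upper bound. Let $P$ be the set of finite $\pi\subset[0,\infty)$ with $0\in\pi$, $P_t:=\{\pi\in P:\max\pi=t\}$. Define $J_hx:=\sup_{\lambda\in\Lambda}S_\lambda(h)x$ for $h>0$ ($J_0=\mathrm{id}$) and for $\pi=\{t_0<\dots<t_m\}$, $t_0=0$, $J_\pi:=J_{t_1-t_0}\cdots J_{t_m-t_{m-1}}$. *)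

theory Defs
  imports "HOL-Analysis.Analysis"
begin

text \<open>Real Banach lattices are modelled as types of sort
  banach + ordered_real_vector + lattice (a complete normed real vector space
  which is an ordered vector space whose order is a lattice order), together
  with the lattice-norm condition below.\<close>

definition lat_abs :: "'a::{ordered_real_vector, lattice} \<Rightarrow> 'a" where
  "lat_abs x = sup x (- x)"

definition banach_lattice :: "'a::{banach, ordered_real_vector, lattice} itself \<Rightarrow> bool" where
  "banach_lattice _ \<longleftrightarrow> (\<forall>x y :: 'a. lat_abs x \<le> lat_abs y \<longrightarrow> norm x \<le> norm y)"

definition is_lub :: "'a::order set \<Rightarrow> 'a \<Rightarrow> bool" where
  "is_lub A s \<longleftrightarrow> (\<forall>a\<in>A. a \<le> s) \<and> (\<forall>u. (\<forall>a\<in>A. a \<le> u) \<longrightarrow> s \<le> u)"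

definition is_glb :: "'a::order set \<Rightarrow> 'a \<Rightarrow> bool" where
  "is_glb A s \<longleftrightarrow> (\<forall>a\<in>A. s \<le> a) \<and> (\<forall>u. (\<forall>a\<in>A. u \<le> a) \<longrightarrow> u \<le> s)"

definition lub :: "'a::order set \<Rightarrow> 'a" where
  "lub A = (THE s. is_lub A s)"

text \<open>Order continuous norm: every downward directed net decreasing to 0
  has norms tending to 0. A net x_alpha decreasing to 0 is represented by its
  (downward directed) set of values A with infimum 0; norm convergence along the
  net is then: for every eps > 0 some element of A has norm < eps (and then all
  smaller ones do as well, by the lattice norm property).\<close>
definition down_directed :: "'a::order set \<Rightarrow> bool" where
  "down_directed A \<longleftrightarrow> A \<noteq> {} \<and> (\<forall>a\<in>A. \<forall>b\<in>A. \<exists>c\<in>A. c \<le> a \<and> c \<le> b)"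

definition order_continuous_norm :: "'a::{banach, ordered_real_vector, lattice} itself \<Rightarrow> bool" where
  "order_continuous_norm _ \<longleftrightarrow>
     (\<forall>A :: 'a set. down_directed A \<and> is_glb A 0 \<longrightarrow>
        (\<forall>e>0. \<exists>a\<in>A. \<forall>b\<in>A. b \<le> a \<longrightarrow> norm b < e))"

definition bounded_op :: "('a::real_normed_vector \<Rightarrow> 'a) \<Rightarrow> bool" where
  "bounded_op T \<longleftrightarrow> (\<forall>r>0. \<exists>C. \<forall>x. norm x \<le> r \<longrightarrow> norm (T x) \<le> C)"

definition convex_op :: "('a::ordered_real_vector \<Rightarrow> 'a) \<Rightarrow> bool" where
  "convex_op T \<longleftrightarrow> (\<forall>x y. \<forall>l::real. 0 \<le> l \<and> l \<le> 1 \<longrightarrow>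
      T (l *\<^sub>R x + (1 - l) *\<^sub>R y) \<le> l *\<^sub>R T x + (1 - l) *\<^sub>R T y)"

definition monotone_op :: "('a::order \<Rightarrow> 'a) \<Rightarrow> bool" where
  "monotone_op T \<longleftrightarrow> (\<forall>x y. x \<le> y \<longrightarrow> T x \<le> T y)"

definition semigroup :: "(real \<Rightarrow> 'a::real_normed_vector \<Rightarrow> 'a) \<Rightarrow> bool" where
  "semigroup S \<longleftrightarrow> (\<forall>t\<ge>0. bounded_op (S t)) \<and> S 0 = id \<and>
     (\<forall>t\<ge>0. \<forall>s\<ge>0. S (t + s) = S t \<circ> S s)"

definition convex_monotone_semigroup ::
  "(real \<Rightarrow> 'a::{real_normed_vector, ordered_real_vector} \<Rightarrow> 'a) \<Rightarrow> bool" where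
  "convex_monotone_semigroup S \<longleftrightarrow> semigroup S \<and>
     (\<forall>t\<ge>0. convex_op (S t) \<and> monotone_op (S t))"

definition sg_le :: "(real \<Rightarrow> 'a::order \<Rightarrow> 'a) \<Rightarrow> (real \<Rightarrow> 'a \<Rightarrow> 'a) \<Rightarrow> bool" where
  "sg_le S T \<longleftrightarrow> (\<forall>t\<ge>0. \<forall>x. S t x \<le> T t x)"

definition upper_bound_sg ::
  "'l set \<Rightarrow> ('l \<Rightarrow> real \<Rightarrow> 'a::{real_normed_vector, order} \<Rightarrow> 'a) \<Rightarrow> (real \<Rightarrow> 'a \<Rightarrow> 'a) \<Rightarrow> bool" where
  "upper_bound_sg L Ss T \<longleftrightarrow> semigroup T \<and> (\<forall>l\<in>L. sg_le (Ss l) T)"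

definition semigroup_envelope ::
  "'l set \<Rightarrow> ('l \<Rightarrow> real \<Rightarrow> 'a::{real_normed_vector, order} \<Rightarrow> 'a) \<Rightarrow> (real \<Rightarrow> 'a \<Rightarrow> 'a) \<Rightarrow> bool" where
  "semigroup_envelope L Ss S \<longleftrightarrow> upper_bound_sg L Ss S \<and>
     (\<forall>T. upper_bound_sg L Ss T \<longrightarrow> sg_le S T)"

definition partitions :: "real \<Rightarrow> real set set" where
  "partitions t = {p. finite p \<and> p \<subseteq> {0..} \<and> 0 \<in> p \<and> Max p = t}"

definition J_step :: "'l set \<Rightarrow> ('l \<Rightarrow> real \<Rightarrow> 'a::order \<Rightarrow> 'a) \<Rightarrow> real \<Rightarrow> 'a \<Rightarrow> 'a" where
  "J_step L Ss h = (if h = 0 then id else (\<lambda>x. lub {Ss l h x | l. l \<in> L}))"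

fun J_list :: "'l set \<Rightarrow> ('l \<Rightarrow> real \<Rightarrow> 'a::order \<Rightarrow> 'a) \<Rightarrow> real list \<Rightarrow> 'a \<Rightarrow> 'a" where
  "J_list L Ss (a # b # rest) = J_step L Ss (b - a) \<circ> J_list L Ss (b # rest)"
| "J_list L Ss _ = id"

definition J_part :: "'l set \<Rightarrow> ('l \<Rightarrow> real \<Rightarrow> 'a::order \<Rightarrow> 'a) \<Rightarrow> real set \<Rightarrow> 'a \<Rightarrow> 'a" where
  "J_part L Ss p = J_list L Ss (sorted_list_of_set p)"

end

theory Submission
  imports Defs
begin


lemma lat_abs_nonneg: "0 \<le> lat_abs (x::'a::{ordered_real_vector, lattice})"
proof -
  have "x \<le> lat_abs x" "- x \<le> lat_abs x" by (auto simp: lat_abs_def)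
  then have "x + - x \<le> lat_abs x + lat_abs x" by (rule add_mono)
  then have "0 \<le> lat_abs x + lat_abs x" by simp
  then have "0 \<le> (1/2::real) *\<^sub>R (lat_abs x + lat_abs x)" by (intro scaleR_nonneg_nonneg) auto
  also have "(1/2::real) *\<^sub>R (lat_abs x + lat_abs x) = lat_abs x"
    by (metis scaleR_half_double)
  finally show ?thesis .
qed

lemma lat_abs_pos: "0 \<le> (x::'a::{ordered_real_vector, lattice}) \<Longrightarrow> lat_abs x = x"
  unfolding lat_abs_def by (rule sup_absorb1) (meson dual_order.trans neg_le_0_iff_le)

lemma lat_abs_ge: "(x::'a::{ordered_real_vector, lattice}) \<le> lat_abs x" "- x \<le> lat_abs x"
  by (auto simp: lat_abs_def)

lemma norm_lat_abs:
  assumes "banach_lattice TYPE('a::{banach, ordered_real_vector, lattice})"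
  shows "norm (lat_abs (x::'a)) = norm x"
proof -
  have e: "lat_abs (lat_abs x) = lat_abs x" by (simp add: lat_abs_nonneg lat_abs_pos)
  show ?thesis using assms unfolding banach_lattice_def
    by (metis e order_refl antisym)
qed

lemma norm_mono_pos:
  assumes "banach_lattice TYPE('a::{banach, ordered_real_vector, lattice})"
    and "0 \<le> a" "a \<le> (b::'a)"
  shows "norm a \<le> norm b"
  using assms unfolding banach_lattice_def
  by (metis lat_abs_pos order_trans)

lemma norm_le_abs:
  assumes "banach_lattice TYPE('a::{banach, ordered_real_vector, lattice})"
    and "0 \<le> a" "lat_abs x \<le> (a::'a)"
  shows "norm x \<le> norm a"
  using assms unfolding banach_lattice_def by (metis lat_abs_pos)

lemma norm_between:
  assumes "banach_lattice TYPE('a::{banach, ordered_real_vector, lattice})"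
    and "a \<le> m" "m \<le> (b::'a)"
  shows "norm m \<le> norm a + norm b"
proof -
  have p: "0 \<le> lat_abs a + lat_abs b" using lat_abs_nonneg add_nonneg_nonneg by blast
  have "m \<le> lat_abs a + lat_abs b"
    by (metis add.commute add_increasing assms(3) lat_abs_ge(1) lat_abs_nonneg order_trans)
  moreover have "- m \<le> lat_abs a + lat_abs b"
    by (meson add_increasing2 assms(2) lat_abs_ge(2) lat_abs_nonneg neg_le_iff_le order_trans)
  ultimately have "lat_abs m \<le> lat_abs a + lat_abs b" by (simp add: lat_abs_def)
  then have "norm m \<le> norm (lat_abs a + lat_abs b)" using norm_le_abs[OF assms(1) p] by blast
  also have "\<dots> \<le> norm (lat_abs a) + norm (lat_abs b)" by (rule norm_triangle_ineq)
  finally show ?thesis using norm_lat_abs[OF assms(1)] by simp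
qed

lemma norm_pospart:
  assumes "banach_lattice TYPE('a::{banach, ordered_real_vector, lattice})"
    and "y \<le> r" "0 \<le> (r::'a)"
  shows "norm (sup y 0) \<le> norm r"
  by (rule norm_mono_pos[OF assms(1)]) (auto simp: assms)

lemma pospart_zero: "sup (y::'a::{ordered_real_vector, lattice}) 0 = 0 \<Longrightarrow> y \<le> 0"
  by (metis sup.cobounded1)

lemma archimedean:
  assumes "banach_lattice TYPE('a::{banach, ordered_real_vector, lattice})"
    and "0 \<le> w" "\<And>n::nat. real n *\<^sub>R w \<le> (c::'a)"
  shows "w = 0"
proof -
  have "real n * norm w \<le> norm (lat_abs c)" for n
  proof -
    have "norm (real n *\<^sub>R w) \<le> norm (lat_abs c)"
      by (rule norm_mono_pos[OF assms(1)]) (use assms lat_abs_ge(1)[of c] order_trans scaleR_nonneg_nonneg[of "real n" w] in auto)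
    then show ?thesis by simp
  qed
  then have "norm w \<le> 0"
    by (metis linorder_not_le mult_le_cancel_right1 norm_ge_zero not_one_le_zero
        reals_Archimedean3 less_le_not_le)
  then show ?thesis by simp
qed

lemma closed_cone:
  assumes "banach_lattice TYPE('a::{banach, ordered_real_vector, lattice})"
    and "\<And>n. 0 \<le> f n" "f \<longlonglongrightarrow> (y::'a)"
  shows "0 \<le> y"
proof -
  let ?q = "sup (- y) 0"
  have "norm ?q \<le> norm (f n - y)" for n
  proof -
    have "- y \<le> f n - y" using assms(2)[of n] by simp
    also have "\<dots> \<le> lat_abs (f n - y)" by (rule lat_abs_ge)
    finally have "norm ?q \<le> norm (lat_abs (f n - y))"
      by (intro norm_pospart[OF assms(1)] lat_abs_nonneg)
    then show ?thesis using norm_lat_abs[OF assms(1)] by simp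
  qed
  moreover have "(\<lambda>n. norm (f n - y)) \<longlonglongrightarrow> 0"
    using assms(3) by (simp add: LIM_zero tendsto_norm_zero)
  ultimately have "norm ?q \<le> 0"
    by (meson LIMSEQ_le_const)
  then have "?q = 0" by simp
  then show ?thesis by (metis pospart_zero neg_le_0_iff_le)
qed



definition up_directed :: "'a::order set \<Rightarrow> bool" where
  "up_directed A \<longleftrightarrow> A \<noteq> {} \<and> (\<forall>a\<in>A. \<forall>b\<in>A. \<exists>c\<in>A. a \<le> c \<and> b \<le> c)"

lemma inv_suc_lim: "(\<lambda>n. 2 * inverse (real (Suc n))) \<longlonglongrightarrow> 0"
  using tendsto_mult_right_zero[OF LIMSEQ_inverse_real_of_nat, of 2] by (simp add: mult.commute)

lemma null_by_bound:
  assumes "\<And>n. norm (f n) \<le> 2 * inverse (real (Suc n))"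
  shows "f \<longlonglongrightarrow> (0::'a::real_normed_vector)"
  by (rule Lim_null_comparison[OF _ inv_suc_lim]) (use assms in auto)

lemma dir_complete:
  assumes bl: "banach_lattice TYPE('a::{banach, ordered_real_vector, lattice})"
    and oc: "order_continuous_norm TYPE('a)"
    and dir: "up_directed (A::'a set)" and ub: "\<forall>a\<in>A. a \<le> u"
  shows "\<exists>s. is_lub A s"
proof -
  define U where "U = {v. \<forall>a\<in>A. a \<le> v}"
  define D where "D = {v - a | v a. v \<in> U \<and> a \<in> A}"
  have An: "A \<noteq> {}" using dir by (simp add: up_directed_def)
  have uU: "u \<in> U" using ub by (simp add: U_def)
  have dd: "down_directed D"
    unfolding down_directed_def
  proof
    show "D \<noteq> {}" using An uU by (auto simp: D_def)
    show "\<forall>a\<in>D. \<forall>b\<in>D. \<exists>c\<in>D. c \<le> a \<and> c \<le> b"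
    proof (intro ballI)
      fix d1 d2 assume "d1 \<in> D" "d2 \<in> D"
      then obtain v1 a1 v2 a2 where h: "d1 = v1 - a1" "d2 = v2 - a2" "v1 \<in> U" "v2 \<in> U" "a1 \<in> A" "a2 \<in> A"
        by (auto simp: D_def)
      obtain a3 where a3: "a3 \<in> A" "a1 \<le> a3" "a2 \<le> a3" using dir h unfolding up_directed_def by blast
      have "inf v1 v2 \<in> U" using h by (auto simp: U_def)
      then have "inf v1 v2 - a3 \<in> D" using a3 by (auto simp: D_def)
      moreover have "inf v1 v2 - a3 \<le> d1" "inf v1 v2 - a3 \<le> d2" using h a3
        by (auto intro: diff_mono)
      ultimately show "\<exists>c\<in>D. c \<le> d1 \<and> c \<le> d2" by blast
    qed
  qed
  have glb: "is_glb D 0"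
    unfolding is_glb_def
  proof (intro conjI allI impI ballI)
    fix d assume "d \<in> D" then show "0 \<le> d" by (auto simp: D_def U_def)
  next
    fix w assume w: "\<forall>d\<in>D. w \<le> d"
    define w' where "w' = sup w 0"
    have w'D: "\<forall>d\<in>D. w' \<le> d" using w by (auto simp: w'_def D_def U_def)
    have step: "v - w' \<in> U" if "v \<in> U" for v
    proof -
      have "a \<le> v - w'" if "a \<in> A" for a
      proof -
        have "w' \<le> v - a" using w'D \<open>v \<in> U\<close> that by (auto simp: D_def)
        then show ?thesis by (simp add: le_diff_eq add.commute)
      qed
      then show ?thesis by (simp add: U_def)
    qed
    have it: "u - real n *\<^sub>R w' \<in> U" for n
    proof (induction n)
      case 0 then show ?case using uU by simp
    next
      case (Suc n)
      have eq: "u - real (Suc n) *\<^sub>R w' = (u - real n *\<^sub>R w') - w'" by (simp add: algebra_simps)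
      show ?case unfolding eq by (rule step[OF Suc])
    qed
    obtain a0 where a0: "a0 \<in> A" using An by blast
    have "real n *\<^sub>R w' \<le> u - a0" for n
      using it[of n] a0 unfolding U_def by (simp add: le_diff_eq add.commute)
    then have "w' = 0" using archimedean[OF bl, of w' "u - a0"] by (simp add: w'_def)
    then show "w \<le> 0" by (simp add: w'_def pospart_zero)
  qed
  have key: "\<exists>v\<in>U. \<exists>a0\<in>A. \<forall>a\<in>A. a0 \<le> a \<longrightarrow> norm (v - a) < e" if "e > 0" for e
  proof -
    from oc dd glb that obtain d where d: "d \<in> D" "\<forall>b\<in>D. b \<le> d \<longrightarrow> norm b < e"
      unfolding order_continuous_norm_def by blast
    then obtain v a0 where va: "d = v - a0" "v \<in> U" "a0 \<in> A" by (auto simp: D_def)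
    have "\<forall>a\<in>A. a0 \<le> a \<longrightarrow> norm (v - a) < e"
    proof (intro ballI impI)
      fix a assume "a \<in> A" "a0 \<le> a"
      then have "v - a \<in> D" "v - a \<le> d" using va by (auto simp: D_def intro: diff_left_mono)
      then show "norm (v - a) < e" using d(2) by blast
    qed
    then show ?thesis using va by blast
  qed
  have "\<forall>n. \<exists>v c. v \<in> U \<and> c \<in> A \<and> (\<forall>a\<in>A. c \<le> a \<longrightarrow> norm (v - a) < inverse (real (Suc n)))"
    using key by (metis inverse_positive_iff_positive of_nat_0_less_iff zero_less_Suc)
  then obtain v c where vc: "\<And>n. v n \<in> U" "\<And>n. c n \<in> A"
     "\<And>n a. a \<in> A \<Longrightarrow> c n \<le> a \<Longrightarrow> norm (v n - a) < inverse (real (Suc n))"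
    by metis
  have close: "norm (a - c n) < 2 * inverse (real (Suc n))" if "a \<in> A" "c n \<le> a" for a n
  proof -
    have "norm (a - c n) \<le> norm (v n - a) + norm (v n - c n)"
      by (metis norm_minus_commute norm_triangle_sub add.commute diff_diff_eq2 norm_diff_triangle_ineq
          diff_add_cancel)
    also have "\<dots> < 2 * inverse (real (Suc n))" using vc(3)[OF that] vc(3)[OF vc(2) order_refl, of n] by simp
    finally show ?thesis .
  qed
  have cauchy: "Cauchy c"
  proof (rule metric_CauchyI)
    fix e :: real assume e: "0 < e"
    obtain M where M: "4 / e < real M" using reals_Archimedean2 by blast
    have Mp: "4 / real (Suc M) < e" using M e
      by (smt (verit) divide_less_eq less_divide_eq mult.commute of_nat_Suc of_nat_0_le_iff)
    show "\<exists>M. \<forall>m\<ge>M. \<forall>n\<ge>M. dist (c m) (c n) < e"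
    proof (intro exI allI impI)
      fix m n assume mn: "M \<le> m" "M \<le> n"
      obtain a where a: "a \<in> A" "c m \<le> a" "c n \<le> a" using dir vc(2) unfolding up_directed_def by blast
      have "dist (c m) (c n) \<le> norm (a - c m) + norm (a - c n)"
        by (metis dist_norm dist_triangle2 dist_commute)
      also have "\<dots> < 2 * inverse (real (Suc m)) + 2 * inverse (real (Suc n))"
        using close a by (simp add: add_strict_mono)
      also have "\<dots> \<le> 2 * inverse (real (Suc M)) + 2 * inverse (real (Suc M))"
        using mn by (intro add_mono mult_left_mono le_imp_inverse_le) auto
      also have "\<dots> = 4 / real (Suc M)" by (simp add: inverse_eq_divide)
      finally show "dist (c m) (c n) < e" using Mp by linarith
    qed
  qed
  then obtain s where s: "c \<longlonglongrightarrow> s" using Cauchy_convergent_iff convergent_def by blast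
  have "is_lub A s"
    unfolding is_lub_def
  proof (intro conjI ballI allI impI)
    fix a assume a: "a \<in> A"
    have "\<forall>n. \<exists>b. b \<in> A \<and> a \<le> b \<and> c n \<le> b" using dir a vc(2) unfolding up_directed_def by metis
    then obtain b where b: "\<And>n. b n \<in> A" "\<And>n. a \<le> b n" "\<And>n. c n \<le> b n" by metis
    have "(\<lambda>n. b n - c n) \<longlonglongrightarrow> 0"
      by (rule null_by_bound) (use close b in \<open>auto intro: less_imp_le\<close>)
    then have "(\<lambda>n. (b n - c n) + c n) \<longlonglongrightarrow> 0 + s" using s by (intro tendsto_add)
    then have "b \<longlonglongrightarrow> s" by simp
    then have "(\<lambda>n. b n - a) \<longlonglongrightarrow> s - a" by (intro tendsto_diff) auto
    then have "0 \<le> s - a" using closed_cone[OF bl] b(2) by (metis diff_ge_0_iff_ge)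
    then show "a \<le> s" by simp
  next
    fix w assume w: "\<forall>a\<in>A. a \<le> w"
    have "(\<lambda>n. w - c n) \<longlonglongrightarrow> w - s" using s by (intro tendsto_diff) auto
    then have "0 \<le> w - s" using closed_cone[OF bl] w vc(2) by (metis diff_ge_0_iff_ge)
    then show "s \<le> w" by simp
  qed
  then show ?thesis ..
qed



lemma complete:
  assumes bl: "banach_lattice TYPE('a::{banach, ordered_real_vector, lattice})"
    and oc: "order_continuous_norm TYPE('a)"
    and ne: "(A::'a set) \<noteq> {}" and ub: "\<forall>a\<in>A. a \<le> u"
  shows "\<exists>s. is_lub A s"
proof -
  define A' where "A' = {Sup_fin F | F. finite F \<and> F \<noteq> {} \<and> F \<subseteq> A}"
  have "up_directed A'"
    unfolding up_directed_def
  proof (intro conjI ballI)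
    obtain a where "a \<in> A" using ne by blast
    then have "Sup_fin {a} \<in> A'" unfolding A'_def by blast
    then show "A' \<noteq> {}" by blast
  next
    fix x y assume "x \<in> A'" "y \<in> A'"
    then obtain F G where FG: "x = Sup_fin F" "finite F" "F \<noteq> {}" "F \<subseteq> A"
       "y = Sup_fin G" "finite G" "G \<noteq> {}" "G \<subseteq> A" unfolding A'_def by blast
    have "Sup_fin (F \<union> G) \<in> A'" using FG unfolding A'_def by blast
    moreover have "x \<le> Sup_fin (F \<union> G)" "y \<le> Sup_fin (F \<union> G)" using FG
      by (auto simp: Sup_fin.bounded_iff intro: Sup_fin.coboundedI)
    ultimately show "\<exists>c\<in>A'. x \<le> c \<and> y \<le> c" by blast
  qed
  moreover have "\<forall>a\<in>A'. a \<le> u" using ub unfolding A'_def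
    by (force intro: Sup_fin.boundedI)
  ultimately obtain s where s: "is_lub A' s" using dir_complete[OF bl oc] by blast
  have "is_lub A s"
    unfolding is_lub_def
  proof (intro conjI ballI allI impI)
    fix a assume "a \<in> A"
    then have "Sup_fin {a} \<in> A'" unfolding A'_def by blast
    then show "a \<le> s" using s by (simp add: is_lub_def)
  next
    fix w assume "\<forall>a\<in>A. a \<le> w"
    then have "\<forall>a\<in>A'. a \<le> w" unfolding A'_def by (force intro: Sup_fin.boundedI)
    then show "s \<le> w" using s by (simp add: is_lub_def)
  qed
  then show ?thesis ..
qed

lemma is_lub_unique: "is_lub A s \<Longrightarrow> is_lub A s' \<Longrightarrow> s = (s'::'a::order)"
  unfolding is_lub_def by (meson antisym)

lemma lub_eq: "is_lub A s \<Longrightarrow> lub A = s"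
  unfolding lub_def by (rule the_equality) (auto intro: is_lub_unique)

lemma lub_is_lub: "is_lub A s \<Longrightarrow> is_lub A (lub A)"
  using lub_eq by metis



lemma small_zero:
  assumes "\<And>m::real. 0 < m \<Longrightarrow> m < 1 \<Longrightarrow> N \<le> K * m" "0 \<le> K" "0 \<le> N"
  shows "N = 0"
proof (rule ccontr)
  assume "N \<noteq> 0" then have N: "N > 0" using assms by simp
  define m where "m = min (1/2) (N / (2*K+1))"
  have m: "0 < m" "m < 1" using N assms(2) by (auto simp: m_def)
  have "K * m \<le> K * (N / (2*K+1))" using assms(2) by (intro mult_left_mono) (auto simp: m_def)
  also have "\<dots> < N" using N assms(2) by (simp add: field_simps add_pos_nonneg)
  finally show False using assms(1)[OF m] by simp
qed

lemma cont_op: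
  assumes bl: "banach_lattice TYPE('a::{banach, ordered_real_vector, lattice})"
    and oc: "order_continuous_norm TYPE('a)"
    and cv: "convex_op T" and mo: "monotone_op T" and bd: "bounded_op (T::'a \<Rightarrow> 'a)"
    and dir: "up_directed A" and s: "is_lub A s"
  shows "is_lub (T ` A) (T s)"
  unfolding is_lub_def
proof (intro conjI ballI allI impI)
  fix y assume "y \<in> T ` A"
  then show "y \<le> T s" using s mo by (auto simp: is_lub_def monotone_op_def)
next
  fix u assume u: "\<forall>y\<in>T ` A. y \<le> u"
  define D where "D = {s - a | a. a \<in> A}"
  have dd: "down_directed D"
    unfolding down_directed_def
  proof
    show "D \<noteq> {}" using dir by (auto simp: D_def up_directed_def)
    show "\<forall>a\<in>D. \<forall>b\<in>D. \<exists>c\<in>D. c \<le> a \<and> c \<le> b"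
    proof (intro ballI)
      fix d1 d2 assume "d1 \<in> D" "d2 \<in> D"
      then obtain a1 a2 where h: "d1 = s - a1" "d2 = s - a2" "a1 \<in> A" "a2 \<in> A"
        by (auto simp: D_def)
      obtain a3 where a3: "a3 \<in> A" "a1 \<le> a3" "a2 \<le> a3" using dir h unfolding up_directed_def by blast
      then have "s - a3 \<in> D" by (auto simp: D_def)
      moreover have "s - a3 \<le> d1" "s - a3 \<le> d2" using h a3 by (auto intro: diff_left_mono)
      ultimately show "\<exists>c\<in>D. c \<le> d1 \<and> c \<le> d2" by blast
    qed
  qed
  have glb: "is_glb D 0"
    unfolding is_glb_def
  proof (intro conjI allI impI ballI)
    fix d assume "d \<in> D" then show "0 \<le> d" using s by (auto simp: D_def is_lub_def)
  next
    fix w assume w: "\<forall>d\<in>D. w \<le> d"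
    have "\<forall>a\<in>A. a \<le> s - w" using w by (auto simp: D_def le_diff_eq add.commute)
    then have "s \<le> s - w" using s by (simp add: is_lub_def)
    then show "w \<le> 0" by simp
  qed
  have approx: "\<exists>a\<in>A. norm (s - a) < e" if "e > 0" for e
  proof -
    from oc dd glb that obtain d where d: "d \<in> D" "\<forall>b\<in>D. b \<le> d \<longrightarrow> norm b < e"
      unfolding order_continuous_norm_def by blast
    then show ?thesis by (auto simp: D_def)
  qed
  obtain C where C: "\<And>w. norm w \<le> norm s + 2 \<Longrightarrow> norm (T w) \<le> C"
    using bd unfolding bounded_op_def
    by (metis add_nonneg_pos norm_ge_zero zero_less_numeral)
  have C0: "0 \<le> C" using C[of s] by (meson norm_ge_zero order_trans le_add_same_cancel1 zero_le_numeral)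
  let ?N = "norm (sup (T s - u) 0)"
  have bound: "?N \<le> (2*C) * m" if m: "0 < m" "m < 1" for m
  proof -
    obtain a where a: "a \<in> A" "norm (s - a) < m" using approx m by blast
    define z where "z = a + (1/m) *\<^sub>R (s - a)"
    have sz: "s = (1 - m) *\<^sub>R a + (1 - (1 - m)) *\<^sub>R z" using m
      by (simp add: z_def algebra_simps)
    have c: "T ((1 - m) *\<^sub>R a + (1 - (1 - m)) *\<^sub>R z) \<le> (1 - m) *\<^sub>R T a + (1 - (1 - m)) *\<^sub>R T z"
      using cv[unfolded convex_op_def, rule_format, of "1-m" a z] m by simp
    have "T s \<le> (1 - m) *\<^sub>R T a + (1 - (1 - m)) *\<^sub>R T z"
      using c[folded sz] .
    then have tsa: "T s - T a \<le> m *\<^sub>R (T z - T a)" by (simp add: algebra_simps)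
    have "a \<le> s" using s a by (simp add: is_lub_def)
    then have "T a \<le> T s" using mo by (simp add: monotone_op_def)
    then have r0: "0 \<le> m *\<^sub>R (T z - T a)" using tsa by (meson diff_ge_0_iff_ge order_trans)
    have "T s - u \<le> T s - T a" using u a by (auto intro: diff_left_mono)
    then have "T s - u \<le> m *\<^sub>R (T z - T a)" using tsa by (rule order_trans)
    then have "?N \<le> norm (m *\<^sub>R (T z - T a))" by (rule norm_pospart[OF bl _ r0])
    also have "\<dots> = m * norm (T z - T a)" using m by simp
    also have "\<dots> \<le> m * (C + C)"
    proof -
      have t1: "norm a - norm s \<le> norm (s - a)"
        using norm_triangle_sub[of a s] by (simp add: norm_minus_commute)
      have na: "norm a \<le> norm s + 2" using t1 a m by linarith
      have "norm ((1/m) *\<^sub>R (s - a)) = norm (s - a) / m"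
        by (simp only: norm_scaleR) (use m in simp)
      then have t2: "norm ((1/m) *\<^sub>R (s - a)) \<le> 1" using a m by simp
      have "norm z \<le> norm a + norm ((1/m) *\<^sub>R (s - a))"
        unfolding z_def by (rule norm_triangle_ineq)
      then have "norm z \<le> norm s + 2" using t1 t2 a m by linarith
      then have "norm (T z - T a) \<le> C + C"
        using C[of z] C[OF na] norm_triangle_ineq4[of "T z" "T a"] by linarith
      then show ?thesis using m by (simp add: mult_left_mono)
    qed
    finally show ?thesis by (simp add: algebra_simps)
  qed
  have "?N = 0" by (rule small_zero[OF bound]) (use C0 in auto)
  then have "T s - u \<le> 0" by (intro pospart_zero) simp
  then show "T s \<le> u" by simp
qed



definition LL :: "real \<Rightarrow> real \<Rightarrow> real list set" where
  "LL a b = {xs. sorted_wrt (<) xs \<and> xs \<noteq> [] \<and> hd xs = a \<and> last xs = b}"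

lemma ss_bounds:
  "sorted_wrt (<) (xs::real list) \<Longrightarrow> x \<in> set xs \<Longrightarrow> hd xs \<le> x \<and> x \<le> last xs"
proof (induction xs)
  case Nil then show ?case by simp
next
  case (Cons a xs)
  show ?case
  proof (cases "xs = []")
    case True then show ?thesis using Cons by simp
  next
    case False
    then have "last xs \<in> set xs" by simp
    then show ?thesis using Cons False by (auto dest: less_imp_le)
  qed
qed

lemma LL_of_set:
  assumes "finite P" "\<forall>x\<in>P. a \<le> x \<and> x \<le> b" "a \<in> P" "b \<in> P"
  shows "sorted_list_of_set P \<in> LL a b"
proof -
  let ?xs = "sorted_list_of_set P"
  have s: "sorted_wrt (<) ?xs" by simp
  have st: "set ?xs = P" using assms by simp
  have ne: "?xs \<noteq> []" using assms st by auto
  have h1: "hd ?xs \<in> P" using ne st hd_in_set by blast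
  have h2: "last ?xs \<in> P" using ne st last_in_set by blast
  have h3: "hd ?xs \<le> a" using ss_bounds[OF s, of a] st assms(3) by blast
  have h4: "b \<le> last ?xs" using ss_bounds[OF s, of b] st assms(4) by blast
  have "hd ?xs = a" using h1 h3 assms(2) by (meson antisym)
  moreover have "last ?xs = b" using h2 h4 assms(2) by (meson antisym)
  ultimately show ?thesis using s ne unfolding LL_def by blast
qed

lemma set_LL_eq: "sorted_wrt (<) (xs::real list) \<Longrightarrow> sorted_list_of_set (set xs) = xs"
  by (rule strict_sorted_equal) auto

lemma LL_sorted: "xs \<in> LL a b \<Longrightarrow> sorted_wrt (<) xs" by (simp add: LL_def)

lemma LL_bounds: "xs \<in> LL a b \<Longrightarrow> x \<in> set xs \<Longrightarrow> a \<le> x \<and> x \<le> b"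
  unfolding LL_def using ss_bounds by blast

lemma LL_mem: "xs \<in> LL a b \<Longrightarrow> a \<in> set xs \<and> b \<in> set xs"
  unfolding LL_def by auto

lemma LL_single: "LL a a = {[a]}"
proof -
  have "xs = [a]" if "xs \<in> LL a a" for xs
  proof (cases xs)
    case Nil then show ?thesis using that by (simp add: LL_def)
  next
    case (Cons y ys)
    have "y = a" using that Cons by (simp add: LL_def)
    moreover have "ys = []"
    proof (rule ccontr)
      assume "ys \<noteq> []"
      then have "last ys \<in> set ys" "last xs = last ys" using Cons by auto
      then show False using that Cons \<open>y = a\<close> by (auto simp: LL_def)
    qed
    ultimately show ?thesis using Cons by simp
  qed
  then show ?thesis by (auto simp: LL_def)
qed

lemma LL_two: "a < b \<Longrightarrow> [a, b] \<in> LL a b" by (simp add: LL_def)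

lemma LL_le: "xs \<in> LL a b \<Longrightarrow> a \<le> b"
  using LL_bounds LL_mem by blast

lemma LL_append:
  assumes "us \<in> LL a m" "vs \<in> LL m c"
  shows "us @ tl vs \<in> LL a c"
proof -
  have vs: "vs = m # tl vs" using assms(2) by (cases vs) (auto simp: LL_def)
  have "sorted_wrt (<) (m # tl vs)" using assms(2) vs by (simp add: LL_def)
  then have tl: "sorted_wrt (<) (tl vs)" "\<forall>y\<in>set (tl vs). m < y"
    by simp_all
  have "\<forall>x\<in>set us. \<forall>y\<in>set (tl vs). x < y"
    using LL_bounds[OF assms(1)] tl(2) by force
  then have "sorted_wrt (<) (us @ tl vs)" using tl(1) assms(1) by (simp add: LL_def sorted_wrt_append)
  moreover have "last (us @ tl vs) = c"
  proof (cases "tl vs = []")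
    case True
    have "vs = [m]" by (subst vs) (simp add: True)
    then have "c = m" using assms(2) by (simp add: LL_def)
    then show ?thesis using assms(1) True by (simp add: LL_def)
  next
    case False
    then have "last (us @ tl vs) = last vs" using vs by (metis last_ConsR last_appendR)
    then show ?thesis using assms(2) by (simp add: LL_def)
  qed
  moreover have "us \<noteq> []" "hd us = a" using assms(1) by (auto simp: LL_def)
  ultimately show ?thesis unfolding LL_def by (simp add: hd_append2)
qed

lemma LL_shift: "xs \<in> LL a b \<Longrightarrow> map (\<lambda>x. x + c) xs \<in> LL (a + c) (b + c)"
  unfolding LL_def by (auto simp: sorted_wrt_map hd_map last_map elim: sorted_wrt_mono_rel[rotated])



lemma up_dir_image:
  "up_directed A \<Longrightarrow> (\<And>x y. x \<le> y \<Longrightarrow> f x \<le> f y) \<Longrightarrow> up_directed (f ` A)"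
proof -
  assume A: "up_directed A" and f: "\<And>x y. x \<le> y \<Longrightarrow> f x \<le> f y"
  show ?thesis
    unfolding up_directed_def
  proof (intro conjI ballI)
    show "f ` A \<noteq> {}" using A by (simp add: up_directed_def)
  next
    fix x y assume "x \<in> f ` A" "y \<in> f ` A"
    then obtain a b where ab: "a \<in> A" "b \<in> A" "x = f a" "y = f b" by blast
    then obtain c where "c \<in> A" "a \<le> c" "b \<le> c" using A unfolding up_directed_def by blast
    then show "\<exists>z\<in>f ` A. x \<le> z \<and> y \<le> z" using ab f by blast
  qed
qed

locale env =
  fixes L :: "'l set" and Ss :: "'l \<Rightarrow> real \<Rightarrow> 'a::{banach, ordered_real_vector, lattice} \<Rightarrow> 'a"
    and S :: "real \<Rightarrow> 'a \<Rightarrow> 'a"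
  assumes bl: "banach_lattice TYPE('a)" and oc: "order_continuous_norm TYPE('a)"
    and cms: "\<forall>l\<in>L. convex_monotone_semigroup (Ss l)" and env: "semigroup_envelope L Ss S"
    and Lne: "L \<noteq> {}"
begin

abbreviation J where "J \<equiv> J_step L Ss"
abbreviation JL where "JL \<equiv> J_list L Ss"

lemma S_sg: "semigroup S" using env by (simp add: semigroup_envelope_def upper_bound_sg_def)
lemma S_add: "0 \<le> t \<Longrightarrow> 0 \<le> s \<Longrightarrow> S (t + s) y = S t (S s y)"
  using S_sg by (simp add: semigroup_def)
lemma S_0: "S 0 y = y" using S_sg by (simp add: semigroup_def)
lemma Ss_le_S: "l \<in> L \<Longrightarrow> 0 \<le> h \<Longrightarrow> Ss l h y \<le> S h y"
  using env by (simp add: semigroup_envelope_def upper_bound_sg_def sg_le_def)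
lemma Ss_sg: "l \<in> L \<Longrightarrow> semigroup (Ss l)"
  using cms by (simp add: convex_monotone_semigroup_def)
lemma Ss_mono: "l \<in> L \<Longrightarrow> 0 \<le> h \<Longrightarrow> y \<le> y' \<Longrightarrow> Ss l h y \<le> Ss l h y'"
  using cms by (simp add: convex_monotone_semigroup_def monotone_op_def)
lemma Ss_props: "l \<in> L \<Longrightarrow> 0 \<le> h \<Longrightarrow> convex_op (Ss l h) \<and> monotone_op (Ss l h) \<and> bounded_op (Ss l h)"
  using cms by (simp add: convex_monotone_semigroup_def semigroup_def)
lemma Ss_add: "l \<in> L \<Longrightarrow> 0 \<le> t \<Longrightarrow> 0 \<le> s \<Longrightarrow> Ss l (t + s) y = Ss l t (Ss l s y)"
  using Ss_sg by (simp add: semigroup_def)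
lemma Ss_0: "l \<in> L \<Longrightarrow> Ss l 0 y = y"
  using Ss_sg by (simp add: semigroup_def)

lemma J_lub: "0 < h \<Longrightarrow> is_lub {Ss l h y | l. l \<in> L} (J h y)"
proof -
  assume h: "0 < h"
  have "\<exists>s. is_lub {Ss l h y | l. l \<in> L} s"
    by (rule complete[OF bl oc, where u = "S h y"]) (use Lne Ss_le_S h in auto)
  then obtain s where s: "is_lub {Ss l h y | l. l \<in> L} s" by blast
  have "J h y = lub {Ss l h y | l. l \<in> L}" using h by (simp add: J_step_def)
  also have "\<dots> = s" by (rule lub_eq[OF s])
  finally show ?thesis using s by simp
qed

lemma J_ge: "0 < h \<Longrightarrow> l \<in> L \<Longrightarrow> Ss l h y \<le> J h y"
  using J_lub unfolding is_lub_def by blast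

lemma J_least: "0 < h \<Longrightarrow> (\<And>l. l \<in> L \<Longrightarrow> Ss l h y \<le> u) \<Longrightarrow> J h y \<le> u"
  using J_lub[of h y] unfolding is_lub_def by blast

lemma J_le_S: "0 \<le> h \<Longrightarrow> J h y \<le> S h y"
proof (cases "h = 0")
  case True then show ?thesis by (simp add: J_step_def S_0)
next
  case False
  assume "0 \<le> h" then have "0 < h" using False by simp
  then show ?thesis by (rule J_least) (use Ss_le_S \<open>0 \<le> h\<close> in auto)
qed

lemma J_mono: "0 \<le> h \<Longrightarrow> y \<le> y' \<Longrightarrow> J h y \<le> J h y'"
proof (cases "h = 0")
  case True then show "y \<le> y' \<Longrightarrow> ?thesis" by (simp add: J_step_def)
next
  case False
  assume h: "0 \<le> h" and y: "y \<le> y'"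
  then have h': "0 < h" using False by simp
  show ?thesis
  proof (rule J_least[OF h'])
    fix l assume l: "l \<in> L"
    have "Ss l h y \<le> Ss l h y'" using Ss_mono[OF l h y] .
    also have "\<dots> \<le> J h y'" using J_ge[OF h' l] .
    finally show "Ss l h y \<le> J h y'" .
  qed
qed

lemma J_split: "0 < a \<Longrightarrow> 0 < b \<Longrightarrow> J (a + b) y \<le> J a (J b y)"
proof -
  assume a: "0 < a" and b: "0 < b"
  show ?thesis
  proof (rule J_least)
    show "0 < a + b" using a b by simp
  next
    fix l assume l: "l \<in> L"
    have "Ss l (a + b) y = Ss l a (Ss l b y)" using Ss_add[OF l] a b by simp
    also have "\<dots> \<le> Ss l a (J b y)" using Ss_mono[OF l _ J_ge[OF b l]] a by simp
    also have "\<dots> \<le> J a (J b y)" using J_ge[OF a l] .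
    finally show "Ss l (a + b) y \<le> J a (J b y)" .
  qed
qed

lemma J_cont:
  assumes h: "0 \<le> h" and A: "up_directed A" and s: "is_lub A s"
  shows "is_lub (J h ` A) (J h s)"
proof (cases "h = 0")
  case True then show ?thesis using s by (simp add: J_step_def)
next
  case False
  then have h': "0 < h" using h by simp
  show ?thesis
    unfolding is_lub_def
  proof (intro conjI ballI allI impI)
    fix z assume "z \<in> J h ` A"
    then show "z \<le> J h s" using s J_mono[OF h] by (auto simp: is_lub_def)
  next
    fix u assume u: "\<forall>z\<in>J h ` A. z \<le> u"
    show "J h s \<le> u"
    proof (rule J_least[OF h'])
      fix l assume l: "l \<in> L"
      have c: "is_lub (Ss l h ` A) (Ss l h s)"
        using cont_op[OF bl oc _ _ _ A s] Ss_props[OF l h] by blast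
      have "\<forall>z\<in>Ss l h ` A. z \<le> u"
        using u J_ge[OF h' l] by (auto intro: order_trans)
      then show "Ss l h s \<le> u" using c by (simp add: is_lub_def)
    qed
  qed
qed

lemma JL_mono: "sorted_wrt (<) xs \<Longrightarrow> y \<le> y' \<Longrightarrow> JL xs y \<le> JL xs y'"
proof (induction xs arbitrary: y y' rule: induct_list012)
  case (3 a b r)
  have "JL (b # r) y \<le> JL (b # r) y'" using 3 by simp
  moreover have "0 \<le> b - a" using "3.prems" by simp
  ultimately show ?case by (simp add: J_mono)
qed auto

lemma JL_le_S: "sorted_wrt (<) xs \<Longrightarrow> xs \<noteq> [] \<Longrightarrow> JL xs y \<le> S (last xs - hd xs) y"
proof (induction xs arbitrary: y rule: induct_list012)
  case (2 a) then show ?case by (simp add: S_0)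
next
  case (3 a b r)
  have ba: "0 \<le> b - a" using "3.prems" by simp
  have lb: "0 \<le> last (b # r) - b" using ss_bounds[of "b # r" "last (b # r)"] "3.prems" by simp
  have "JL (a # b # r) y = J (b - a) (JL (b # r) y)" by simp
  also have "\<dots> \<le> J (b - a) (S (last (b # r) - b) y)"
    using 3 ba by (intro J_mono) auto
  also have "\<dots> \<le> S (b - a) (S (last (b # r) - b) y)" using J_le_S ba by blast
  also have "\<dots> = S (last (a # b # r) - hd (a # b # r)) y"
    using S_add[OF ba lb] by simp
  finally show ?case .
qed simp

lemma JL_cont:
  "sorted_wrt (<) xs \<Longrightarrow> up_directed A \<Longrightarrow> is_lub A s \<Longrightarrow> is_lub (JL xs ` A) (JL xs s)"
proof (induction xs arbitrary: A s rule: induct_list012)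
  case 1 then show ?case by simp
next
  case (2 a) then show ?case by simp
next
  case (3 a b r)
  have ih: "is_lub (JL (b # r) ` A) (JL (b # r) s)" using 3 by simp
  have d: "up_directed (JL (b # r) ` A)"
    using "3.prems" by (intro up_dir_image JL_mono) auto
  have ba: "0 \<le> b - a" using "3.prems" by simp
  have "is_lub (J (b - a) ` (JL (b # r) ` A)) (J (b - a) (JL (b # r) s))"
    by (rule J_cont[OF ba d ih])
  then show ?case by (simp add: image_comp)
qed

lemma JL_shift: "JL (map (\<lambda>x. x + c) xs) = JL xs"
  by (induction xs rule: induct_list012) auto

lemma JL_append: "us \<noteq> [] \<Longrightarrow> vs \<noteq> [] \<Longrightarrow> last us = hd vs \<Longrightarrow> JL (us @ tl vs) = JL us \<circ> JL vs"
proof (induction us rule: induct_list012)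
  case (2 a)
  then have "vs = a # tl vs" by (cases vs) auto
  then have e: "[a] @ tl vs = vs" by (metis append_Cons append_Nil)
  show ?case by (simp only: e) simp
next
  case (3 a b r)
  have "JL ((b # r) @ tl vs) = JL (b # r) \<circ> JL vs"
    by (rule "3.IH"(2)) (use "3.prems" in auto)
  then show ?case by (simp add: fun_eq_iff)
next
  case 1 then show ?case by blast
qed

end



context env begin

lemma refine:
  "sorted_wrt (<) zs \<Longrightarrow> sorted_wrt (<) xs \<Longrightarrow> xs \<noteq> [] \<Longrightarrow> zs \<noteq> [] \<Longrightarrow>
   hd xs = hd zs \<Longrightarrow> last xs = last zs \<Longrightarrow> set xs \<subseteq> set zs \<Longrightarrow> JL xs y \<le> JL zs y"
proof (induction zs arbitrary: xs y rule: induct_list012)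
  case 1 then show ?case by simp
next
  case (2 a)
  obtain x0 xs1 where xs: "xs = x0 # xs1" using "2.prems"(3) by (cases xs) auto
  have "xs1 = []"
  proof (rule ccontr)
    assume "xs1 \<noteq> []"
    then obtain z where z: "z \<in> set xs1" by (cases xs1) auto
    then have "x0 < z" using "2.prems"(2) xs by simp
    moreover have "z = a" "x0 = a" using z "2.prems"(5,7) xs by auto
    ultimately show False by simp
  qed
  then show ?case using xs "2.prems"(5) by simp
next
  case (3 a b r)
  note IH = "3.IH"(2)
  obtain x0 xs1 where xs: "xs = x0 # xs1" using "3.prems"(3) by (cases xs) auto
  have x0: "x0 = a" using xs "3.prems"(5) by simp
  have zs_s: "sorted_wrt (<) (b # r)" "a < b" "\<forall>z\<in>set r. a < z" using "3.prems"(1) by auto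
  have lastz: "last (a # b # r) = last (b # r)" by simp
  have ab_last: "a < last (b # r)"
    using zs_s ss_bounds[of "b # r" "last (b # r)"] by auto
  have "xs1 \<noteq> []"
  proof
    assume "xs1 = []"
    then have "last xs = a" using xs x0 by simp
    then show False using "3.prems"(6) ab_last by simp
  qed
  then obtain c xs' where xs1: "xs1 = c # xs'" by (cases xs1) auto
  have xs_s: "a < c" "\<forall>z\<in>set xs'. c < z" "sorted_wrt (<) xs'"
    using "3.prems"(2) xs xs1 x0 by auto
  have sub1: "set xs1 \<subseteq> set (b # r)"
  proof
    fix z assume z: "z \<in> set xs1"
    then have "a < z" using "3.prems"(2) xs x0 by auto
    moreover have "z \<in> set (a # b # r)" using z "3.prems"(7) xs by auto
    ultimately show "z \<in> set (b # r)" by auto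
  qed
  have cb: "b \<le> c" using sub1 xs1 ss_bounds[OF zs_s(1), of c] by auto
  have last1: "last xs1 = last (b # r)" using "3.prems"(6) xs \<open>xs1 \<noteq> []\<close> by simp
  show ?case
  proof (cases "c = b")
    case True
    have "JL xs1 y \<le> JL (b # r) y"
      by (rule IH) (use "3.prems"(2) xs zs_s(1) \<open>xs1 \<noteq> []\<close> xs1 True last1 sub1 in auto)
    then show ?thesis using xs xs1 x0 True zs_s(2) J_mono[of "b - a"] by simp
  next
    case False
    then have cb': "b < c" using cb by simp
    have "JL xs y = J (c - a) (JL (c # xs') y)" using xs xs1 x0 by simp
    also have "\<dots> = J ((b - a) + (c - b)) (JL (c # xs') y)" by simp
    also have "\<dots> \<le> J (b - a) (J (c - b) (JL (c # xs') y))"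
      by (rule J_split) (use zs_s cb' in auto)
    also have "\<dots> = J (b - a) (JL (b # c # xs') y)" by simp
    also have "\<dots> \<le> J (b - a) (JL (b # r) y)"
    proof (rule J_mono)
      show "0 \<le> b - a" using zs_s by simp
      show "JL (b # c # xs') y \<le> JL (b # r) y"
      proof (rule IH)
        show "sorted_wrt (<) (b # c # xs')" using cb' xs_s by auto
        show "last (b # c # xs') = last (b # r)" using last1 xs1 by simp
        show "set (b # c # xs') \<subseteq> set (b # r)" using sub1 xs1 by auto
      qed (use zs_s in auto)
    qed
    also have "\<dots> = JL (a # b # r) y" by simp
    finally show ?thesis .
  qed
qed

lemma JL_split:
  "zs \<in> LL a c \<Longrightarrow> m \<in> set zs \<Longrightarrow> \<exists>us vs. us \<in> LL a m \<and> vs \<in> LL m c \<and> JL zs = JL us \<circ> JL vs"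
proof (induction zs arbitrary: a)
  case Nil then show ?case by simp
next
  case (Cons z zs)
  have za: "z = a" using Cons.prems by (simp add: LL_def)
  show ?case
  proof (cases "m = a")
    case True
    have "[a] \<in> LL a m" using True by (simp add: LL_def)
    moreover have "z # zs \<in> LL m c" using Cons.prems True by simp
    moreover have "JL (z # zs) = JL [a] \<circ> JL (z # zs)" by simp
    ultimately show ?thesis by blast
  next
    case False
    then have m: "m \<in> set zs" using Cons.prems za by simp
    then obtain b r where zs: "zs = b # r" by (cases zs) auto
    have zsLL: "zs \<in> LL b c" using Cons.prems zs by (simp add: LL_def)
    obtain us vs where uv: "us \<in> LL b m" "vs \<in> LL m c" "JL zs = JL us \<circ> JL vs"
      using Cons.IH[OF zsLL m] by blast
    have ab: "a < b" using Cons.prems zs za by (simp add: LL_def)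
    obtain us' where us: "us = b # us'" using uv(1) by (cases us) (auto simp: LL_def)
    have "a # us \<in> LL a m"
    proof -
      have "\<forall>y\<in>set us. a < y" using LL_bounds[OF uv(1)] ab by force
      then show ?thesis using uv(1) us by (auto simp: LL_def)
    qed
    moreover have "JL (z # zs) = JL (a # us) \<circ> JL vs"
      using uv(3) us zs za by (simp add: comp_assoc)
    ultimately show ?thesis using uv(2) by blast
  qed
qed

definition Sb :: "real \<Rightarrow> 'a \<Rightarrow> 'a" where
  "Sb t x = lub {JL xs x | xs. xs \<in> LL 0 t}"

lemma LL0_ne: "0 \<le> t \<Longrightarrow> \<exists>xs. xs \<in> LL 0 t"
proof (cases "t = 0")
  case True then show ?thesis using LL_single by auto
next
  case False
  assume "0 \<le> t" then have "0 < t" using False by simp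
  then show ?thesis using LL_two by blast
qed

lemma Sset_bounded: "xs \<in> LL 0 t \<Longrightarrow> JL xs x \<le> S t x"
  using JL_le_S[of xs x] by (simp add: LL_def)

lemma Sb_lub: "0 \<le> t \<Longrightarrow> is_lub {JL xs x | xs. xs \<in> LL 0 t} (Sb t x)"
proof -
  assume t: "0 \<le> t"
  have "\<exists>s. is_lub {JL xs x | xs. xs \<in> LL 0 t} s"
    by (rule complete[OF bl oc, where u = "S t x"]) (use LL0_ne[OF t] Sset_bounded in auto)
  then obtain s where s: "is_lub {JL xs x | xs. xs \<in> LL 0 t} s" by blast
  show ?thesis unfolding Sb_def using lub_eq[OF s] s by simp
qed

lemma Sb_upper: "0 \<le> t \<Longrightarrow> xs \<in> LL 0 t \<Longrightarrow> JL xs x \<le> Sb t x"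
  using Sb_lub unfolding is_lub_def by blast

lemma Sb_least: "0 \<le> t \<Longrightarrow> (\<And>xs. xs \<in> LL 0 t \<Longrightarrow> JL xs x \<le> u) \<Longrightarrow> Sb t x \<le> u"
  using Sb_lub[of t x] unfolding is_lub_def by blast

lemma Sset_dir: "0 \<le> t \<Longrightarrow> up_directed {JL xs x | xs. xs \<in> LL 0 t}"
  unfolding up_directed_def
proof (intro conjI ballI)
  assume t: "0 \<le> t"
  show "{JL xs x | xs. xs \<in> LL 0 t} \<noteq> {}" using LL0_ne[OF t] by auto
next
  fix p q assume "p \<in> {JL xs x | xs. xs \<in> LL 0 t}" "q \<in> {JL xs x | xs. xs \<in> LL 0 t}"
  then obtain xs ys where h: "xs \<in> LL 0 t" "ys \<in> LL 0 t" "p = JL xs x" "q = JL ys x" by blast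
  define zs where "zs = sorted_list_of_set (set xs \<union> set ys)"
  have zs: "zs \<in> LL 0 t" unfolding zs_def
    by (rule LL_of_set) (use h LL_bounds LL_mem in auto)
  have st: "set zs = set xs \<union> set ys" unfolding zs_def by simp
  have "JL xs x \<le> JL zs x"
    by (rule refine) (use h zs st in \<open>auto simp: LL_def\<close>)
  moreover have "JL ys x \<le> JL zs x"
    by (rule refine) (use h zs st in \<open>auto simp: LL_def\<close>)
  ultimately show "\<exists>c\<in>{JL xs x | xs. xs \<in> LL 0 t}. p \<le> c \<and> q \<le> c" using zs h by blast
qed

lemma Sb_le_S: "0 \<le> t \<Longrightarrow> Sb t x \<le> S t x"
  by (rule Sb_least) (use Sset_bounded in auto)

lemma Sb_0: "Sb 0 x = x"
proof -
  have "{JL xs x | xs. xs \<in> LL 0 0} = {x}" using LL_single by auto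
  then show ?thesis unfolding Sb_def by (simp add: lub_eq is_lub_def)
qed

lemma Ss_le_Sb: "l \<in> L \<Longrightarrow> 0 \<le> t \<Longrightarrow> Ss l t x \<le> Sb t x"
proof (cases "t = 0")
  case True
  assume "l \<in> L" then show ?thesis using True by (simp add: Sb_0 Ss_0)
next
  case False
  assume l: "l \<in> L" and t: "0 \<le> t"
  then have t': "0 < t" using False by simp
  have "Ss l t x \<le> J t x" by (rule J_ge[OF t' l])
  also have "\<dots> = JL [0, t] x" by simp
  also have "\<dots> \<le> Sb t x" by (rule Sb_upper[OF t LL_two[OF t']])
  finally show ?thesis .
qed

lemma Sb_bounded: "0 \<le> t \<Longrightarrow> bounded_op (Sb t)"
  unfolding bounded_op_def
proof (intro allI impI)
  fix r :: real assume t: "0 \<le> t" and r: "r > 0"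
  obtain l0 where l0: "l0 \<in> L" using Lne by blast
  obtain C1 where C1: "\<And>x. norm x \<le> r \<Longrightarrow> norm (Ss l0 t x) \<le> C1"
    using Ss_props[OF l0 t] r unfolding bounded_op_def by blast
  obtain C2 where C2: "\<And>x. norm x \<le> r \<Longrightarrow> norm (S t x) \<le> C2"
    using S_sg t r unfolding semigroup_def bounded_op_def by blast
  show "\<exists>C. \<forall>x. norm x \<le> r \<longrightarrow> norm (Sb t x) \<le> C"
  proof (intro exI allI impI)
    fix x :: 'a assume x: "norm x \<le> r"
    have "norm (Sb t x) \<le> norm (Ss l0 t x) + norm (S t x)"
      by (rule norm_between[OF bl Ss_le_Sb[OF l0 t] Sb_le_S[OF t]])
    then show "norm (Sb t x) \<le> C1 + C2" using C1[OF x] C2[OF x] by linarith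
  qed
qed

lemma Sb_add: "0 \<le> t \<Longrightarrow> 0 \<le> s \<Longrightarrow> Sb (t + s) x = Sb t (Sb s x)"
proof (rule antisym)
  assume t: "0 \<le> t" and s: "0 \<le> s"
  have ts: "0 \<le> t + s" using t s by simp
  show "Sb (t + s) x \<le> Sb t (Sb s x)"
  proof (rule Sb_least[OF ts])
    fix zs assume zs: "zs \<in> LL 0 (t + s)"
    define zs' where "zs' = sorted_list_of_set (insert t (set zs))"
    have zs': "zs' \<in> LL 0 (t + s)" unfolding zs'_def
      by (rule LL_of_set) (use zs LL_bounds LL_mem t s in auto)
    have st: "set zs' = insert t (set zs)" unfolding zs'_def by (rule set_sorted_list_of_set) simp
    have "JL zs x \<le> JL zs' x"
      by (rule refine) (use zs zs' st in \<open>auto simp: LL_def\<close>)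
    moreover obtain us vs where uv: "us \<in> LL 0 t" "vs \<in> LL t (t + s)" "JL zs' = JL us \<circ> JL vs"
      using JL_split[OF zs', of t] st by auto
    define vs' where "vs' = map (\<lambda>x. x + (- t)) vs"
    have vs': "vs' \<in> LL 0 s" using LL_shift[OF uv(2), of "- t"] by (simp add: vs'_def)
    have "JL vs x = JL vs' x" unfolding vs'_def using JL_shift[of "- t" vs] by simp
    also have "\<dots> \<le> Sb s x" by (rule Sb_upper[OF s vs'])
    finally have "JL us (JL vs x) \<le> JL us (Sb s x)"
      using uv(1) by (intro JL_mono) (auto simp: LL_def)
    also have "\<dots> \<le> Sb t (Sb s x)" by (rule Sb_upper[OF t uv(1)])
    finally show "JL zs x \<le> Sb t (Sb s x)" using uv(3) \<open>JL zs x \<le> JL zs' x\<close> by simp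
  qed
next
  assume t: "0 \<le> t" and s: "0 \<le> s"
  have ts: "0 \<le> t + s" using t s by simp
  show "Sb t (Sb s x) \<le> Sb (t + s) x"
  proof (rule Sb_least[OF t])
    fix us assume us: "us \<in> LL 0 t"
    let ?B = "{JL vs x | vs. vs \<in> LL 0 s}"
    have c: "is_lub (JL us ` ?B) (JL us (Sb s x))"
      by (rule JL_cont) (use us Sset_dir[OF s] Sb_lub[OF s] in \<open>auto simp: LL_def\<close>)
    have "\<forall>z\<in>JL us ` ?B. z \<le> Sb (t + s) x"
    proof
      fix z assume "z \<in> JL us ` ?B"
      then obtain vs where vs: "vs \<in> LL 0 s" "z = JL us (JL vs x)" by blast
      define vs' where "vs' = map (\<lambda>x. x + t) vs"
      have vs': "vs' \<in> LL t (t + s)" using LL_shift[OF vs(1), of t] by (simp add: vs'_def add.commute)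
      have "JL (us @ tl vs') = JL us \<circ> JL vs'"
        by (rule JL_append) (use us vs' in \<open>auto simp: LL_def\<close>)
      moreover have "JL vs' = JL vs" unfolding vs'_def by (rule JL_shift)
      ultimately have "z = JL (us @ tl vs') x" using vs(2) by simp
      also have "\<dots> \<le> Sb (t + s) x" by (rule Sb_upper[OF ts LL_append[OF us vs']])
      finally show "z \<le> Sb (t + s) x" .
    qed
    then show "JL us (Sb s x) \<le> Sb (t + s) x" using c by (simp add: is_lub_def)
  qed
qed

lemma Sb_sg: "semigroup Sb"
  unfolding semigroup_def
  using Sb_bounded Sb_0 Sb_add by (auto simp: fun_eq_iff)

lemma main: "0 \<le> t \<Longrightarrow> is_lub {JL xs x | xs. xs \<in> LL 0 t} (S t x)"
proof -
  assume t: "0 \<le> t"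
  have "upper_bound_sg L Ss Sb"
    unfolding upper_bound_sg_def sg_le_def using Sb_sg Ss_le_Sb by blast
  then have "sg_le S Sb" using env by (simp add: semigroup_envelope_def)
  then have "S t x \<le> Sb t x" using t by (simp add: sg_le_def)
  then have "S t x = Sb t x" using Sb_le_S[OF t] by (simp add: antisym)
  then show ?thesis using Sb_lub[OF t] by simp
qed

end



lemma part_eq:
  assumes t: "0 \<le> t"
  shows "{J_part L Ss p x | p. p \<in> partitions t} = {J_list L Ss xs x | xs. xs \<in> LL 0 t}"
proof (intro set_eqI iffI)
  fix z assume "z \<in> {J_part L Ss p x | p. p \<in> partitions t}"
  then obtain p where p: "p \<in> partitions t" "z = J_part L Ss p x" by blast
  have pf: "finite p" "p \<subseteq> {0..}" "0 \<in> p" "Max p = t" using p(1) by (auto simp: partitions_def)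
  have "sorted_list_of_set p \<in> LL 0 t"
  proof (rule LL_of_set)
    show "\<forall>x\<in>p. 0 \<le> x \<and> x \<le> t" using pf by auto
    show "t \<in> p" using pf Max_in by blast
  qed (use pf in auto)
  then show "z \<in> {J_list L Ss xs x | xs. xs \<in> LL 0 t}" using p(2) by (auto simp: J_part_def)
next
  fix z assume "z \<in> {J_list L Ss xs x | xs. xs \<in> LL 0 t}"
  then obtain xs where xs: "xs \<in> LL 0 t" "z = J_list L Ss xs x" by blast
  have "Max (set xs) = t"
    by (rule Max_eqI) (use LL_bounds[OF xs(1)] LL_mem[OF xs(1)] in auto)
  then have "set xs \<in> partitions t"
    using LL_bounds[OF xs(1)] LL_mem[OF xs(1)] by (auto simp: partitions_def)
  moreover have "J_part L Ss (set xs) x = z"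
    using xs set_LL_eq[OF LL_sorted[OF xs(1)]] by (simp add: J_part_def)
  ultimately show "z \<in> {J_part L Ss p x | p. p \<in> partitions t}" by blast
qed

lemma empty_case:
  fixes Ss :: "'l \<Rightarrow> real \<Rightarrow> 'a::{banach, ordered_real_vector, lattice} \<Rightarrow> 'a"
  assumes bl: "banach_lattice TYPE('a)" and env: "semigroup_envelope {} Ss S"
  shows "(y::'a) = 0"
proof -
  define T where "T c = (\<lambda>t (x::'a). x - t *\<^sub>R c)" for c :: 'a
  have sg: "semigroup (T c)" for c
    unfolding semigroup_def
  proof (intro conjI allI impI)
    fix t :: real assume "0 \<le> t"
    show "bounded_op (T c t)"
      unfolding bounded_op_def
    proof (intro allI impI exI)
      fix r :: real and x :: 'a assume "norm x \<le> r"
      then show "norm (T c t x) \<le> r + norm (t *\<^sub>R c)"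
        unfolding T_def by (smt (verit) norm_triangle_ineq4)
    qed
  next
    show "T c 0 = id" by (simp add: T_def fun_eq_iff)
  next
    fix t s :: real
    show "T c (t + s) = T c t \<circ> T c s" by (simp add: T_def fun_eq_iff algebra_simps)
  qed
  have "upper_bound_sg {} Ss (T c)" for c using sg by (simp add: upper_bound_sg_def)
  then have "sg_le S (T c)" for c using env by (simp add: semigroup_envelope_def)
  then have le: "S 1 0 \<le> - c" for c
    unfolding sg_le_def T_def by (metis add.left_neutral diff_conv_add_uminus scaleR_one zero_le_one)
  have "real n *\<^sub>R lat_abs y \<le> - S 1 0" for n using le[of "real n *\<^sub>R lat_abs y"] by (simp add: le_minus_iff)
  then have "lat_abs y = 0" using archimedean[OF bl lat_abs_nonneg] by blast
  then have "lat_abs y \<le> lat_abs (0::'a)" by (simp add: lat_abs_def)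
  then have "norm y \<le> norm (0::'a)" using bl unfolding banach_lattice_def by blast
  then show ?thesis by simp
qed

theorem corollary4p5:
  fixes L :: "'l set"
    and Ss :: "'l \<Rightarrow> real \<Rightarrow> 'a::{banach, ordered_real_vector, lattice} \<Rightarrow> 'a"
    and S :: "real \<Rightarrow> 'a \<Rightarrow> 'a"
  assumes "banach_lattice TYPE('a)"
    and "order_continuous_norm TYPE('a)"
    and "\<forall>l\<in>L. convex_monotone_semigroup (Ss l)"
    and "semigroup_envelope L Ss S"
  shows "\<forall>t\<ge>0. \<forall>x. is_lub {J_part L Ss p x | p. p \<in> partitions t} (S t x)"
proof (intro allI impI)
  fix t :: real and x :: 'a assume t: "0 \<le> t"
  show "is_lub {J_part L Ss p x | p. p \<in> partitions t} (S t x)"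
  proof (cases "L = {}")
    case True
    then have z: "\<And>y::'a. y = 0" using empty_case[OF assms(1)] assms(4) by blast
    show ?thesis unfolding is_lub_def by (metis z order_refl)
  next
    case False
    interpret env L Ss S using assms False by unfold_locales auto
    show ?thesis using main[OF t, of x] part_eq[OF t, of L Ss x] by simp
  qed
qed


end
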